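(* Let $W$ be a balanced word. The following are equivalent: (i) $W$ is reduced; (ii) $W$ does not contain a subword of the form $RL^nR$ with $n\ge 2$; (iii) $W=L^a(RL)^{k_1}R(RL)^{k_2}R\cdots(RL)^{k_m}RL^b$ for some integers $a,b,m\ge 0$ with $a+b=m$ and $k_i\ge 0$ for $1\le i\le m$.
   Context: Words are finite products of the letters $L,R$; a subword of $a_1\cdots a_n$ is a contiguous block $a_k\cdots a_l$. A word is balanced if it contains equally many $L$'s and $R$'s. A word is prime if it is nonempty, balanced, and cannot be written as a product of two nonempty balanced words. For a balanced word $W=a_1\cdots a_n$, $e_k(W)=\sum_{i=1}^k\overline{a_i}$ ($0\le k\le n$) with $\overline{R}=1$, $\overline{L}=-1$. A prime $P$ of length $n$ is an upper prime if $e_k(P)>0$ for $1\le k\le n-1$, and a lower prime if $e_k(P)<0$ for $1\le k\le n-1$. A word is reduced if it does not contain a subword of the form $UD$ with $U$ an upper prime and $D$ a lower prime. *)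

theory Defs
  imports Main
begin

datatype letter = L | R

type_synonym word = "letter list"

definition lval :: "letter \<Rightarrow> int" where
  "lval a = (if a = R then 1 else -1)"

definition count_letter :: "letter \<Rightarrow> word \<Rightarrow> nat" where
  "count_letter c w = length (filter (\<lambda>x. x = c) w)"

definition balanced :: "word \<Rightarrow> bool" where
  "balanced w \<longleftrightarrow> count_letter L w = count_letter R w"

definition prime_word :: "word \<Rightarrow> bool" where
  "prime_word w \<longleftrightarrow> w \<noteq> [] \<and> balanced w \<and>
     \<not> (\<exists>u v. u \<noteq> [] \<and> v \<noteq> [] \<and> balanced u \<and> balanced v \<and> w = u @ v)"

definition ek :: "nat \<Rightarrow> word \<Rightarrow> int" where
  "ek k w = sum_list (map lval (take k w))"

definition upper_prime :: "word \<Rightarrow> bool" where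
  "upper_prime p \<longleftrightarrow> prime_word p \<and> (\<forall>k. 1 \<le> k \<and> k \<le> length p - 1 \<longrightarrow> ek k p > 0)"

definition lower_prime :: "word \<Rightarrow> bool" where
  "lower_prime p \<longleftrightarrow> prime_word p \<and> (\<forall>k. 1 \<le> k \<and> k \<le> length p - 1 \<longrightarrow> ek k p < 0)"

definition subword :: "word \<Rightarrow> word \<Rightarrow> bool" where
  "subword s w \<longleftrightarrow> (\<exists>u v. w = u @ s @ v)"

definition reduced :: "word \<Rightarrow> bool" where
  "reduced w \<longleftrightarrow> \<not> (\<exists>U D. upper_prime U \<and> lower_prime D \<and> subword (U @ D) w)"

end

theory Submission
  imports Defs
begin

definition blk :: "nat list \<Rightarrow> word" where
  "blk ks = concat (map (\<lambda>k. concat (replicate k [R, L]) @ [R]) ks)"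

abbreviation PP :: "word \<Rightarrow> bool" where
  "PP W \<equiv> (\<exists>n\<ge>2. subword ([R] @ replicate n L @ [R]) W)"

lemma blk_simps[simp]: "blk [] = []" "blk (k # ks) = concat (replicate k [R, L]) @ R # blk ks"
  by (auto simp: blk_def)

lemma subword_cons: "subword s (c # w) \<Longrightarrow> (\<exists>v. c # w = s @ v) \<or> subword s w"
  unfolding subword_def
  by (metis append_Cons append_Nil list.sel(3) neq_Nil_conv hd_append list.sel(1))

lemma subword_consI: "subword s w \<Longrightarrow> subword s (c # w)"
  unfolding subword_def by (metis append_Cons)

lemma PP_cons: "PP (c # w) \<Longrightarrow> PP w \<or> (\<exists>n v. c = R \<and> w = replicate (Suc (Suc n)) L @ R # v)"
proof -
  assume "PP (c # w)"
  then obtain n where n: "n \<ge> 2" "subword ([R] @ replicate n L @ [R]) (c # w)" by blast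
  from subword_cons[OF n(2)] show ?thesis
  proof
    assume "\<exists>v. c # w = ([R] @ replicate n L @ [R]) @ v"
    then obtain v where "c # w = ([R] @ replicate n L @ [R]) @ v" by blast
    moreover obtain n' where "n = Suc (Suc n')" using n(1) by (metis add_2_eq_Suc le_Suc_ex)
    ultimately show ?thesis by auto
  next
    assume "subword ([R] @ replicate n L @ [R]) w" thus ?thesis using n by blast
  qed
qed

lemma noPP_L: "\<not> PP w \<Longrightarrow> \<not> PP (L # w)"
  using PP_cons[of L w] by blast

lemma noPP_Lrep: "\<not> PP w \<Longrightarrow> \<not> PP (replicate a L @ w)"
proof (induction a)
  case (Suc a)
  from noPP_L[OF Suc.IH[OF Suc.prems]] show ?case by simp
qed simp

lemma noPP_blk: "\<not> PP (blk ks @ replicate b L)"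
proof (induction ks)
  case Nil
  show ?case by (auto dest!: PP_cons simp: subword_def) (metis append_Cons in_set_conv_decomp in_set_replicate letter.distinct(1) set_append)+
next
  case (Cons k ks)
  define X where "X = blk ks @ replicate b L"
  have X: "\<not> PP X" using Cons X_def by simp
  have X2: "X \<noteq> replicate (Suc (Suc n)) L @ R # v" for n v
  proof (cases ks)
    case Nil
    then show ?thesis unfolding X_def
      by (metis append_Cons append_Nil blk_simps(1) in_set_conv_decomp in_set_replicate letter.distinct(1) set_append)
  next
    case (Cons a list)
    then show ?thesis unfolding X_def by (cases a) auto
  qed
  have "\<not> PP (concat (replicate k [R, L]) @ R # X)"
  proof (induction k)
    case 0
    show ?case using X X2 PP_cons[of R X] by auto
  next
    case (Suc k)
    have h: "concat (replicate k [R, L]) @ R # X \<noteq> replicate (Suc n) L @ R # v" for n v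
      by (cases k) auto
    show ?case using Suc h PP_cons[of R "L # concat (replicate k [R, L]) @ R # X"]
        PP_cons[of L "concat (replicate k [R, L]) @ R # X"] by auto
  qed
  then show ?case by (simp add: X_def)
qed

lemma PP_cons_I: "PP w \<Longrightarrow> PP (c # w)"
  using subword_consI by blast

lemma form_exists: "\<not> PP W \<Longrightarrow> \<exists>a ks b. W = replicate a L @ blk ks @ replicate b L"
proof (induction W)
  case Nil
  show ?case by (rule exI[of _ 0], rule exI[of _ "[]"], rule exI[of _ 0]) simp
next
  case (Cons c W)
  then have "\<not> PP W" using PP_cons_I by blast
  with Cons obtain a ks b where W: "W = replicate a L @ blk ks @ replicate b L" by blast
  show ?case
  proof (cases c)
    case L
    then show ?thesis using W
      by (intro exI[of _ "Suc a"] exI[of _ ks] exI[of _ b]) simp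
  next
    case cR: R
    show ?thesis
    proof (cases ks)
      case Nil
      then show ?thesis using W cR
        by (intro exI[of _ 0] exI[of _ "[0]"] exI[of _ "a+b"]) (simp add: replicate_add)
    next
      case (Cons k ks')
      show ?thesis
      proof (cases a)
        case 0
        then show ?thesis using W cR Cons
          by (intro exI[of _ 0] exI[of _ "0 # ks"] exI[of _ b]) simp
      next
        case (Suc a')
        show ?thesis
        proof (cases a')
          case 0
          then show ?thesis using W cR Cons Suc
            by (intro exI[of _ 0] exI[of _ "Suc k # ks'"] exI[of _ b]) simp
        next
          case (Suc a'')
          have "PP (c # W)"
          proof (cases k)
            case 0
            show ?thesis
              apply (rule exI[of _ a])
              using W cR Cons Suc \<open>a = Suc a'\<close> 0 unfolding subword_def
              by (intro conjI exI[of _ "[]"] exI[of _ "blk ks' @ replicate b L"]) auto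
          next
            case (Suc k')
            show ?thesis
              apply (rule exI[of _ a])
              using W cR Cons Suc \<open>a = Suc a'\<close> \<open>a' = Suc a''\<close> unfolding subword_def
              by (intro conjI exI[of _ "[]"] exI[of _ "L # concat (replicate k' [R, L]) @ R # blk ks' @ replicate b L"]) auto
          qed
          then show ?thesis using Cons.prems by blast
        qed
      qed
    qed
  qed
qed

definition hh :: "word \<Rightarrow> int" where "hh w = sum_list (map lval w)"

lemma hh_simps[simp]: "hh [] = 0" "hh (c # w) = lval c + hh w" "hh (u @ v) = hh u + hh v"
  by (auto simp: hh_def)

lemma lval_simps[simp]: "lval R = 1" "lval L = -1" by (auto simp: lval_def)

lemma hh_count: "hh w = int (count_letter R w) - int (count_letter L w)"
proof (induction w)
  case (Cons c w) then show ?case by (cases c) (auto simp: count_letter_def)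
qed (simp add: count_letter_def)

lemma balanced_hh: "balanced w \<longleftrightarrow> hh w = 0"
  by (auto simp: balanced_def hh_count)

lemma ek_hh: "ek k w = hh (take k w)" by (simp add: ek_def hh_def)

lemma hh_rep_L[simp]: "hh (replicate a L) = - int a" by (induction a) auto

lemma hh_RL[simp]: "hh (concat (replicate k [R, L])) = 0" by (induction k) auto

lemma hh_blk[simp]: "hh (blk ks) = int (length ks)" by (induction ks) auto

lemma hh_rev[simp]: "hh (rev w) = hh w" by (induction w) auto

lemma ek_Suc: "j < length Y \<Longrightarrow> ek (Suc j) Y = ek j Y + lval (Y ! j)"
  by (simp add: ek_hh take_Suc_conv_app_nth)

lemma lval_le1: "lval c \<le> 1" by (cases c) auto

lemma lower_exists:
  assumes "Y = L # Y'" "Y = Y1 @ Y2" "Y1 \<noteq> []" "hh Y1 \<ge> 0"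
  shows "\<exists>D Z. Y = D @ Z \<and> lower_prime D"
proof -
  define P where "P k \<longleftrightarrow> 1 \<le> k \<and> k \<le> length Y \<and> ek k Y \<ge> 0" for k
  have tY: "take (length Y1) Y = Y1" "length Y1 \<le> length Y" using assms(2) by auto
  have "1 \<le> length Y1" using assms(3) by (cases Y1) auto
  then have P1: "P (length Y1)" using assms(4) tY unfolding P_def by (simp add: ek_hh)
  define k where "k = (LEAST k. P k)"
  have Pk: "P k" unfolding k_def by (rule LeastI[of P, OF P1])
  have mink: "\<not> P j" if "j < k" for j using not_less_Least[of j P] that k_def by blast
  have e1: "ek 1 Y = -1" using assms(1) by (simp add: ek_hh)
  have "k \<noteq> 1" using Pk e1 unfolding P_def by auto
  then have k2: "k \<ge> 2" using Pk unfolding P_def by auto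
  obtain j where j: "k = Suc j" using k2 by (cases k) auto
  have "ek j Y < 0" using mink[of j] j k2 Pk unfolding P_def by auto
  moreover have "ek k Y = ek j Y + lval (Y ! j)" using j Pk unfolding P_def by (simp add: ek_Suc)
  ultimately have ek0: "ek k Y = 0" using Pk lval_le1[of "Y ! j"] unfolding P_def by linarith
  define D where "D = take k Y"
  have lenD: "length D = k" using Pk unfolding P_def D_def by auto
  have ekD: "ek i D = ek i Y" if "i \<le> k" for i
    using that unfolding D_def ek_hh by (simp add: min_absorb1)
  have neg: "ek i D < 0" if "1 \<le> i" "i \<le> length D - 1" for i
  proof -
    have "i < k" using that lenD k2 by auto
    then have "\<not> P i" by (rule mink)
    then show ?thesis using that \<open>i < k\<close> Pk ekD[of i] unfolding P_def by auto
  qed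
  have "lower_prime D"
    unfolding lower_prime_def prime_word_def
  proof (intro conjI allI impI)
    show "D \<noteq> []" using lenD k2 by auto
    show "balanced D" using ek0 ekD[of k] lenD by (simp add: balanced_hh ek_hh)
    show "\<not> (\<exists>u v. u \<noteq> [] \<and> v \<noteq> [] \<and> balanced u \<and> balanced v \<and> D = u @ v)"
    proof
      assume "\<exists>u v. u \<noteq> [] \<and> v \<noteq> [] \<and> balanced u \<and> balanced v \<and> D = u @ v"
      then obtain u v where uv: "u \<noteq> []" "v \<noteq> []" "balanced u" "D = u @ v" by blast
      have "ek (length u) D = 0" using uv by (simp add: ek_hh balanced_hh)
      moreover have "1 \<le> length u" using uv by (cases u) auto
      moreover have "length u \<le> length D - 1" using uv by (cases v) auto
      ultimately show False using neg by fastforce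
    qed
  qed (rule neg, auto)
  moreover have "Y = D @ drop k Y" unfolding D_def by simp
  ultimately show ?thesis by blast
qed

lemma balanced_rev[simp]: "balanced (rev w) = balanced w"
  by (simp add: balanced_hh)

lemma lower_rev_upper:
  assumes "lower_prime D" shows "upper_prime (rev D)"
  unfolding upper_prime_def prime_word_def
proof (intro conjI allI impI)
  have pD: "prime_word D" using assms by (simp add: lower_prime_def)
  show "rev D \<noteq> []" "balanced (rev D)" using pD by (auto simp: prime_word_def)
  show "\<not> (\<exists>u v. u \<noteq> [] \<and> v \<noteq> [] \<and> balanced u \<and> balanced v \<and> rev D = u @ v)"
  proof
    assume "\<exists>u v. u \<noteq> [] \<and> v \<noteq> [] \<and> balanced u \<and> balanced v \<and> rev D = u @ v"
    then obtain u v where uv: "u \<noteq> []" "v \<noteq> []" "balanced u" "balanced v" "rev D = u @ v" by blast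
    then have "D = rev v @ rev u" by (metis rev_append rev_rev_ident)
    then show False using pD uv unfolding prime_word_def by (metis balanced_rev rev_is_Nil_conv)
  qed
  fix j assume j: "1 \<le> j \<and> j \<le> length (rev D) - 1"
  have hD: "hh D = 0" using pD by (simp add: prime_word_def balanced_hh)
  have "ek j (rev D) = hh (drop (length D - j) D)" by (simp add: ek_hh take_rev)
  also have "\<dots> = hh D - ek (length D - j) D"
    using append_take_drop_id[of "length D - j" D] hh_simps(3)[of "take (length D - j) D" "drop (length D - j) D"]
    by (simp add: ek_hh)
  also have "1 \<le> length D - j \<and> length D - j \<le> length D - 1" using j by auto
  then have "ek (length D - j) D < 0" using assms unfolding lower_prime_def by blast
  then have "hh D - ek (length D - j) D > 0" using hD by simp
  finally show "ek j (rev D) > 0" .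
qed

lemma upper_exists:
  assumes "X = X' @ [L]" "X = X1 @ X2" "X2 \<noteq> []" "hh X2 \<ge> 0"
  shows "\<exists>U Z. X = Z @ U \<and> upper_prime U"
proof -
  have "rev X = L # rev X'" using assms(1) by simp
  moreover have "rev X = rev X2 @ rev X1" using assms(2) by simp
  ultimately have "rev X = L # rev X'" "rev X = rev X2 @ rev X1" by auto
  from lower_exists[OF this] assms obtain D Z where "rev X = D @ Z" "lower_prime D" by auto
  have "X = rev Z @ rev D" using \<open>rev X = D @ Z\<close> by (metis rev_append rev_rev_ident)
  moreover have "upper_prime (rev D)" using \<open>lower_prime D\<close> by (rule lower_rev_upper)
  ultimately
  show ?thesis by blast
qed

lemma subword_trans: "subword s t \<Longrightarrow> subword t w \<Longrightarrow> subword s w"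
  unfolding subword_def by (metis append_assoc)

lemma PP_not_reduced:
  assumes "balanced W" "PP W" shows "\<not> reduced W"
proof -
  obtain n A B where n: "n \<ge> 2" "W = A @ ([R] @ replicate n L @ [R]) @ B"
    using assms(2) unfolding subword_def by blast
  define h0 where "h0 = hh A"
  have hW: "hh W = 0" using assms(1) by (simp add: balanced_hh)
  have hB: "hh B = int n - 2 - h0" using hW n unfolding h0_def by simp
  have main: "\<exists>U D. upper_prime U \<and> lower_prime D \<and> subword (U @ D) W"
    if i: "1 \<le> i" "i < n" and c1: "\<exists>X1 X2. A @ R # replicate i L = X1 @ X2 \<and> X2 \<noteq> [] \<and> hh X2 \<ge> 0"
      and c2: "\<exists>Y1 Y2. replicate (n - i) L @ R # B = Y1 @ Y2 \<and> Y1 \<noteq> [] \<and> hh Y1 \<ge> 0" for i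
  proof -
    obtain i' where i': "i = Suc i'" using i by (cases i) auto
    have e1: "A @ R # replicate i L = (A @ R # replicate i' L) @ [L]"
      using i' by (simp add: replicate_append_same)
    obtain X1 X2 where X: "A @ R # replicate i L = X1 @ X2" "X2 \<noteq> []" "hh X2 \<ge> 0" using c1 by blast
    obtain U Z where U: "A @ R # replicate i L = Z @ U" "upper_prime U"
      using upper_exists[OF e1 X] by blast
    obtain j where j: "n - i = Suc j" using i by (cases "n - i") auto
    have e2: "replicate (n - i) L @ R # B = L # (replicate j L @ R # B)" using j by simp
    obtain Y1 Y2 where Y: "replicate (n - i) L @ R # B = Y1 @ Y2" "Y1 \<noteq> []" "hh Y1 \<ge> 0" using c2 by blast
    obtain D Z' where D: "replicate (n - i) L @ R # B = D @ Z'" "lower_prime D"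
      using lower_exists[OF e2 Y] by blast
    have rep: "replicate n L = replicate i L @ replicate (n - i) L" using i
      by (metis le_add_diff_inverse less_imp_le_nat replicate_add)
    have "W = (A @ R # replicate i L) @ (replicate (n - i) L @ R # B)"
      using n(2) rep by simp
    then have "W = Z @ (U @ D) @ Z'" using U D by simp
    then show ?thesis using U D unfolding subword_def by blast
  qed
  have "\<exists>U D. upper_prime U \<and> lower_prime D \<and> subword (U @ D) W"
  proof (cases "h0 \<le> 0")
    case True
    show ?thesis
    proof (rule main[of 1])
      show "\<exists>X1 X2. A @ R # replicate 1 L = X1 @ X2 \<and> X2 \<noteq> [] \<and> hh X2 \<ge> 0"
        by (rule exI[of _ A], rule exI[of _ "[R, L]"]) simp
      show "\<exists>Y1 Y2. replicate (n - 1) L @ R # B = Y1 @ Y2 \<and> Y1 \<noteq> [] \<and> hh Y1 \<ge> 0"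
        using True hB n by (intro exI[of _ "replicate (n - 1) L @ R # B"] exI[of _ "[]"]) auto
    qed (use n in auto)
  next
    case False
    show ?thesis
    proof (cases "h0 + 2 - int n \<ge> 0")
      case True
      show ?thesis
      proof (rule main[of "n - 1"])
        show "\<exists>X1 X2. A @ R # replicate (n - 1) L = X1 @ X2 \<and> X2 \<noteq> [] \<and> hh X2 \<ge> 0"
          using True n unfolding h0_def by (intro exI[of _ "[]"] exI[of _ "A @ R # replicate (n - 1) L"]) auto
        show "\<exists>Y1 Y2. replicate (n - (n - 1)) L @ R # B = Y1 @ Y2 \<and> Y1 \<noteq> [] \<and> hh Y1 \<ge> 0"
          using n by (intro exI[of _ "[L, R]"] exI[of _ B]) (simp add: numeral_2_eq_2)
      qed (use n in auto)
    next
      case False2: False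
      define i where "i = nat h0 + 1"
      have ii: "int i = h0 + 1" "1 \<le> i" "i < n" using False False2 unfolding i_def by auto
      show ?thesis
      proof (rule main[of i])
        show "\<exists>X1 X2. A @ R # replicate i L = X1 @ X2 \<and> X2 \<noteq> [] \<and> hh X2 \<ge> 0"
          using ii unfolding h0_def by (intro exI[of _ "[]"] exI[of _ "A @ R # replicate i L"]) auto
        show "\<exists>Y1 Y2. replicate (n - i) L @ R # B = Y1 @ Y2 \<and> Y1 \<noteq> [] \<and> hh Y1 \<ge> 0"
          using ii hB by (intro exI[of _ "replicate (n - i) L @ R # B"] exI[of _ "[]"]) (auto simp: of_nat_diff)
      qed (use ii in auto)
    qed
  qed
  then show ?thesis unfolding reduced_def by blast
qed

lemma upper_shape: assumes "upper_prime U" shows "\<exists>x. U = x @ [L] \<and> R \<in> set x"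
proof -
  have pU: "U \<noteq> []" "hh U = 0" using assms by (auto simp: upper_prime_def prime_word_def balanced_hh)
  obtain c u where Uc: "U = c # u" using pU by (cases U) auto
  have u: "u \<noteq> []"
  proof
    assume "u = []" then show False using pU Uc by (cases c) auto
  qed
  then have len: "length U \<ge> 2" using Uc by (cases u) auto
  have "ek 1 U > 0" using assms len unfolding upper_prime_def by auto
  then have c: "c = R" using Uc by (cases c) (auto simp: ek_hh)
  have e: "ek (length U - 1) U > 0" using assms len unfolding upper_prime_def by auto
  have bl: "U = butlast U @ [last U]" using pU by simp
  have "ek (length U - 1) U = hh (butlast U)" by (simp add: ek_hh butlast_conv_take)
  moreover have "hh U = hh (butlast U) + lval (last U)" using bl hh_simps(3)[of "butlast U" "[last U]"] by simp
  ultimately have "lval (last U) < 0" using e pU by linarith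
  then have lst: "last U = L" by (cases "last U") auto
  have "R \<in> set (butlast U)" using Uc c u by simp
  moreover have "U = butlast U @ [L]" using lst bl by simp
  ultimately show ?thesis by blast
qed

lemma lower_shape: assumes "lower_prime D" shows "\<exists>y. D = L # y \<and> R \<in> set y"
proof -
  have pD: "D \<noteq> []" "balanced D" using assms by (auto simp: lower_prime_def prime_word_def)
  obtain c y where Dc: "D = c # y" using pD by (cases D) auto
  have len: "length D \<ge> 2"
  proof (rule ccontr)
    assume "\<not> length D \<ge> 2"
    then have "D = [c]" using Dc by (cases y) auto
    then show False using pD by (cases c) (auto simp: balanced_hh)
  qed
  have "ek 1 D < 0" using assms len unfolding lower_prime_def by auto
  then have c: "c = L" using Dc by (cases c) (auto simp: ek_hh)
  have "count_letter R D = count_letter L D" using pD by (simp add: balanced_def)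
  moreover have "count_letter L D > 0" using Dc c by (simp add: count_letter_def)
  ultimately have "count_letter R y > 0" using Dc c by (simp add: count_letter_def)
  then have "filter (\<lambda>x. x = R) y \<noteq> []" unfolding count_letter_def by auto
  then have "R \<in> set y" by (auto simp: filter_empty_conv)
  then show ?thesis using Dc c by blast
qed

lemma allL: "R \<notin> set z \<Longrightarrow> z = replicate (length z) L"
  by (metis (full_types) letter.exhaust replicate_length_same)

lemma RLLR_PP: assumes "R \<in> set x" "R \<in> set y" shows "PP (x @ [L, L] @ y)"
proof -
  obtain x1 z where x: "x = x1 @ R # z" "R \<notin> set z" using split_list_last[OF assms(1)] by blast
  obtain z' y2 where y: "y = z' @ R # y2" "R \<notin> set z'" using split_list_first[OF assms(2)] by blast
  define p where "p = length z"
  define q where "q = length z'"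
  have x': "x = x1 @ R # replicate p L" using x allL[of z] unfolding p_def by simp
  have y': "y = replicate q L @ R # y2" using y allL[of z'] unfolding q_def by simp
  have r: "replicate (p + 2 + q) L = replicate p L @ [L, L] @ replicate q L"
    by (simp only: replicate_add) (simp add: numeral_2_eq_2)
  have "x @ [L, L] @ y = x1 @ ([R] @ replicate (p + 2 + q) L @ [R]) @ y2"
    unfolding r x' y' by simp
  then show ?thesis unfolding subword_def by (intro exI[of _ "p + 2 + q"]) auto
qed

lemma not_reduced_PP: assumes "\<not> reduced W" shows "PP W"
proof -
  obtain U D where UD: "upper_prime U" "lower_prime D" "subword (U @ D) W"
    using assms unfolding reduced_def by blast
  obtain x y where "U = x @ [L]" "R \<in> set x" "D = L # y" "R \<in> set y"
    using upper_shape[OF UD(1)] lower_shape[OF UD(2)] by blast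
  then have "PP (U @ D)" using RLLR_PP[of x y] by simp
  then show ?thesis using UD(3) subword_trans by blast
qed

lemma map_nth_upt: "map (\<lambda>i. ks ! (i - 1)) [1..<length ks + 1] = ks"
proof -
  have "[1..<length ks + 1] = map Suc [0..<length ks]" by (simp add: map_Suc_upt)
  then show ?thesis by (simp add: comp_def map_nth)
qed

theorem proposition6p4:
  fixes W :: word
  assumes "balanced W"
  shows "(reduced W \<longleftrightarrow> \<not> (\<exists>n\<ge>2. subword ([R] @ replicate n L @ [R]) W))
       \<and> (\<not> (\<exists>n\<ge>2. subword ([R] @ replicate n L @ [R]) W) \<longleftrightarrow>
          (\<exists>a b m (k :: nat \<Rightarrow> nat). a + b = m \<and>
             W = replicate a L @
                 concat (map (\<lambda>i. concat (replicate (k i) [R, L]) @ [R]) [1..<m+1]) @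
                 replicate b L))"
proof (intro conjI iffI)
  assume r: "reduced W"
  show "\<not> PP W"
  proof
    assume "PP W"
    then have "\<not> reduced W" by (rule PP_not_reduced[OF assms])
    then show False using r by (rule notE)
  qed
next
  assume np: "\<not> PP W"
  show "reduced W"
  proof (rule ccontr)
    assume "\<not> reduced W"
    then have "PP W" by (rule not_reduced_PP)
    with np show False by (rule notE)
  qed
next
  assume "\<not> PP W"
  then obtain a ks b where W: "W = replicate a L @ blk ks @ replicate b L" using form_exists by blast
  have "hh W = 0" using assms by (simp add: balanced_hh)
  then have ab: "a + b = length ks" using W by simp
  have cm: "concat (map (\<lambda>i. concat (replicate ((\<lambda>i. ks ! (i - 1)) i) [R, L]) @ [R]) [1..<length ks+1]) = blk ks"
  proof -
    have "map (\<lambda>i. concat (replicate ((\<lambda>i. ks ! (i - 1)) i) [R, L]) @ [R]) [1..<length ks+1]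
        = map (\<lambda>k. concat (replicate k [R, L]) @ [R]) (map (\<lambda>i. ks ! (i - 1)) [1..<length ks+1])"
      by simp
    also have "\<dots> = map (\<lambda>k. concat (replicate k [R, L]) @ [R]) ks" by (simp only: map_nth_upt)
    finally show ?thesis unfolding blk_def by simp
  qed
  show "\<exists>a b m (k :: nat \<Rightarrow> nat). a + b = m \<and>
             W = replicate a L @
                 concat (map (\<lambda>i. concat (replicate (k i) [R, L]) @ [R]) [1..<m+1]) @
                 replicate b L"
    by (rule exI[of _ a], rule exI[of _ b], rule exI[of _ "length ks"], rule exI[of _ "\<lambda>i. ks ! (i - 1)"])
      (simp only: ab W cm simp_thms)
next
  assume "\<exists>a b m (k :: nat \<Rightarrow> nat). a + b = m \<and>
             W = replicate a L @
                 concat (map (\<lambda>i. concat (replicate (k i) [R, L]) @ [R]) [1..<m+1]) @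
                 replicate b L"
  then obtain a b m k where W0: "W = replicate a L @
                 concat (map (\<lambda>i. concat (replicate (k i) [R, L]) @ [R]) [1..<m+1]) @
                 replicate b L" by blast
  have W: "W = replicate a L @ blk (map k [1..<m+1]) @ replicate b L"
    unfolding W0 blk_def by (simp add: comp_def)
  show "\<not> PP W" unfolding W by (rule noPP_Lrep[OF noPP_blk])
qed

end
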